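(* Let $\mathbb G=V_1\times V_2$ be a step-two Carnot group with $\mathcal A(V_1\times V_2)\subsetneq\mathcal A_h(\mathbb G)$. Then there are $x_1,x_2,x_3\in V_1$ such that $\operatorname{Lie}(x_1,x_2,x_3)$ is isomorphic to $\mathbb F_3$ (equivalently, $[x_1,x_2],[x_1,x_3],[x_2,x_3]$ are linearly independent). In addition, there is a bilinear map $b:V_1\times V_2\to\mathbb R$ such that $b(x,[x,x'])=0$ for all $x,x'\in V_1$ and $b(x_1,[x_2,x_3])=1$.
   Context: A step-two Carnot group is $\mathbb G=V_1\times V_2$ ($V_1,V_2$ finite-dimensional real vector spaces, $V_2\ne\{0\}$) with a bilinear skew-symmetric $[\cdot,\cdot]:V_1\times V_1\to V_2$ whose image spans $V_2$, and group law $(x,z)\cdot(x',z')=(x+x',z+z'+[x,x'])$. $\mathcal A_h(\mathbb G)$ is the space of maps $f:\mathbb G\to\mathbb R$ such that for all $(x,z)\in\mathbb G$, $y\in V_1$, $t\mapsto f((x,z)\cdot(ty,0))$ is affine; $\mathcal A(V_1\times V_2)$ is the space of maps affine in the usual sense. For $x_1,x_2,x_3\in V_1$, $\operatorname{Lie}(x_1,x_2,x_3):=\operatorname{span}\{x_1,x_2,x_3\}\times\operatorname{span}\{[x_i,x_j]:i,j\in\{1,2,3\}\}$ with the restricted bracket; it is isomorphic (via a bijective Carnot morphism) to $\mathbb F_3=\Lambda^1(\mathbb R^3)\times\Lambda^2(\mathbb R^3)$ (bracket $\theta\wedge\theta'$) exactly when $\dim\operatorname{span}\{[x_i,x_j]\}=3$.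 *)

theory Defs
  imports "HOL-Analysis.Analysis"
begin

text \<open>Step-two Carnot group structure on V1 x V2, V1 = 'a, V2 = 'b (finite-dim real spaces).\<close>

definition step2_carnot :: "('a::euclidean_space \<Rightarrow> 'a \<Rightarrow> 'b::euclidean_space) \<Rightarrow> bool" where
  "step2_carnot br \<longleftrightarrow> bilinear br \<and> (\<forall>x y. br x y = - br y x)
     \<and> span (range (\<lambda>(x, y). br x y)) = UNIV"

definition carnot_mult :: "('a::real_vector \<Rightarrow> 'a \<Rightarrow> 'b::real_vector) \<Rightarrow> 'a \<times> 'b \<Rightarrow> 'a \<times> 'b \<Rightarrow> 'a \<times> 'b" where
  "carnot_mult br p q = (fst p + fst q, snd p + snd q + br (fst p) (fst q))"

definition affine_real_fun :: "(real \<Rightarrow> real) \<Rightarrow> bool" where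
  "affine_real_fun g \<longleftrightarrow> (\<exists>a c. \<forall>t. g t = a * t + c)"

definition affine_maps :: "('a::real_vector \<times> 'b::real_vector \<Rightarrow> real) set" where
  "affine_maps = {f. \<exists>l c. linear l \<and> (\<forall>v. f v = l v + c)}"

definition h_affine_maps :: "('a::real_vector \<Rightarrow> 'a \<Rightarrow> 'b::real_vector) \<Rightarrow> ('a \<times> 'b \<Rightarrow> real) set" where
  "h_affine_maps br = {f. \<forall>p y. affine_real_fun (\<lambda>t. f (carnot_mult br p (t *\<^sub>R y, 0)))}"

end

theory Submission
  imports Defs
begin


lemma arf_iff: "affine_real_fun g \<longleftrightarrow> (\<forall>t. g t = g 0 + t * (g 1 - g 0))"
  unfolding affine_real_fun_def
proof
  assume "\<exists>a c. \<forall>t. g t = a * t + c"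
  then obtain a c where "\<forall>t. g t = a * t + c" by blast
  then show "\<forall>t. g t = g 0 + t * (g 1 - g 0)" by (simp add: algebra_simps)
next
  assume "\<forall>t. g t = g 0 + t * (g 1 - g 0)"
  then show "\<exists>a c. \<forall>t. g t = a * t + c" by (metis add.commute mult.commute)
qed

lemma arf_add: "affine_real_fun g \<Longrightarrow> affine_real_fun h \<Longrightarrow> affine_real_fun (\<lambda>t. g t + h t)"
  unfolding affine_real_fun_def
  by (metis (no_types, opaque_lifting) add.assoc add.left_commute distrib_right)

lemma arf_diff: "affine_real_fun g \<Longrightarrow> affine_real_fun h \<Longrightarrow> affine_real_fun (\<lambda>t. g t - h t)"
  unfolding affine_real_fun_def
  by (metis (no_types, opaque_lifting) add_diff_add left_diff_distrib)

lemma arf_cmul: "affine_real_fun g \<Longrightarrow> affine_real_fun (\<lambda>t. c * g t)"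
  unfolding affine_real_fun_def
  by (metis (no_types, opaque_lifting) distrib_left mult.assoc)

lemma arf_lin: "affine_real_fun (\<lambda>t. a * t + c)"
  unfolding affine_real_fun_def by blast

lemma arf_hom: "affine_real_fun g \<Longrightarrow> g 0 = 0 \<Longrightarrow> g t = t * g 1"
  using arf_iff by (metis add_0 diff_zero)

lemma linear_real_iff: "linear (f::'a::real_vector \<Rightarrow> real) \<longleftrightarrow>
   (\<forall>x y. f (x + y) = f x + f y) \<and> (\<forall>c x. f (c *\<^sub>R x) = c * f x)"
  by (simp add: linear_iff)

lemma lin_from_span:
  fixes g :: "'b::real_vector \<Rightarrow> real"
  assumes add: "\<And>u v. g (u + v) = g u + g v"
    and hom: "\<And>w c. w \<in> C \<Longrightarrow> g (c *\<^sub>R w) = c * g w"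
    and sp: "span C = UNIV"
  shows "linear g"
proof -
  have g0: "g 0 = 0" using add[of 0 0] by simp
  let ?S = "{v. \<forall>c. g (c *\<^sub>R v) = c * g v}"
  have "subspace ?S"
    unfolding subspace_def
  proof (intro conjI ballI allI)
    show "0 \<in> ?S" using g0 by simp
  next
    fix x y assume "x \<in> ?S" "y \<in> ?S"
    then show "x + y \<in> ?S" by (simp add: scaleR_right_distrib add distrib_left)
  next
    fix c x assume "x \<in> ?S"
    then show "c *\<^sub>R x \<in> ?S" by simp
  qed
  moreover have "C \<subseteq> ?S" using hom by blast
  ultimately have "span C \<subseteq> ?S" by (metis span_minimal)
  then have h2: "\<And>c v. g (c *\<^sub>R v) = c * g v" using sp by blast
  show ?thesis
  proof (rule linearI)
    fix u v show "g (u + v) = g u + g v" by (rule add)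
  next
    fix r b show "g (r *\<^sub>R b) = r *\<^sub>R g b" using h2 by simp
  qed
qed

lemma lin_zero_span:
  fixes g :: "'b::real_vector \<Rightarrow> real"
  assumes "linear g" "\<And>w. w \<in> C \<Longrightarrow> g w = 0" "span C = UNIV"
  shows "g v = 0"
proof -
  have "subspace {v. g v = 0}"
    using linear_add[OF assms(1)] linear_scale[OF assms(1)] linear_0[OF assms(1)] unfolding subspace_def by auto
  then have "span C \<subseteq> {v. g v = 0}" using assms(2) by (intro span_minimal) auto
  then show ?thesis using assms(3) by auto
qed

lemma arf_const: "affine_real_fun (\<lambda>t. k)"
  unfolding affine_real_fun_def by (rule exI[of _ 0]) simp

lemma arf_eq: "affine_real_fun g \<Longrightarrow> (\<And>t. g t = h t) \<Longrightarrow> affine_real_fun h"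
  unfolding affine_real_fun_def by metis

lemma arf_mid: "affine_real_fun g \<Longrightarrow> g 0 = (g 1 + g (-1)) / 2"
  unfolding affine_real_fun_def by auto

lemma arf_2: "affine_real_fun g \<Longrightarrow> g 2 = 2 * g 1 - g 0"
  unfolding affine_real_fun_def by auto

definition dz :: "'b::real_vector \<Rightarrow> ('a::real_vector \<times> 'b \<Rightarrow> real) \<Rightarrow> 'a \<times> 'b \<Rightarrow> real" where
  "dz v F p = F (fst p, snd p + v) - F p"

lemma dz_comm: "dz u (dz v F) = dz v (dz u F)"
  by (rule ext) (simp add: dz_def algebra_simps)

lemma am_zero: "(\<lambda>_. 0) \<in> affine_maps"
  unfolding affine_maps_def
  by (rule CollectI, rule exI[of _ "\<lambda>_. 0"], rule exI[of _ 0]) (simp add: linear_real_iff)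

lemma am_add: "g \<in> affine_maps \<Longrightarrow> h \<in> affine_maps \<Longrightarrow> (\<lambda>p. g p + h p) \<in> affine_maps"
proof -
  assume "g \<in> affine_maps" "h \<in> affine_maps"
  then obtain l1 c1 l2 c2 where 1: "linear l1" "\<forall>v. g v = l1 v + c1" and 2: "linear l2" "\<forall>v. h v = l2 v + c2"
    unfolding affine_maps_def by blast
  have "linear (\<lambda>v. l1 v + l2 v)" using linear_add[OF 1(1)] linear_add[OF 2(1)] linear_scale[OF 1(1)] linear_scale[OF 2(1)]
    by (simp add: linear_real_iff algebra_simps)
  then show ?thesis unfolding affine_maps_def using 1(2) 2(2)
    by (intro CollectI exI[of _ "\<lambda>v. l1 v + l2 v"] exI[of _ "c1 + c2"]) auto
qed

lemma am_cmul: "g \<in> affine_maps \<Longrightarrow> (\<lambda>p. k * g p) \<in> affine_maps"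
proof -
  assume "g \<in> affine_maps"
  then obtain l1 c1 where 1: "linear l1" "\<forall>v. g v = l1 v + c1"
    unfolding affine_maps_def by blast
  have "linear (\<lambda>v. k * l1 v)" using linear_add[OF 1(1)] linear_scale[OF 1(1)]
    by (simp add: linear_real_iff algebra_simps)
  then show ?thesis unfolding affine_maps_def using 1(2)
    by (intro CollectI exI[of _ "\<lambda>v. k * l1 v"] exI[of _ "k * c1"]) (auto simp: algebra_simps)
qed

lemma am_shift: "g \<in> affine_maps \<Longrightarrow> (\<lambda>p. g (fst p, snd p + v)) \<in> affine_maps"
proof -
  assume "g \<in> affine_maps"
  then obtain l1 c1 where 1: "linear l1" "\<forall>v. g v = l1 v + c1"
    unfolding affine_maps_def by blast
  have e: "l1 (fst p, snd p + v) = l1 p + l1 (0, v)" for p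
  proof -
    have "(fst p, snd p + v) = p + (0, v)" by (simp add: prod_eq_iff)
    then show ?thesis using linear_add[OF 1(1)] by metis
  qed
  show ?thesis unfolding affine_maps_def using 1 e
    by (intro CollectI exI[of _ "l1"] exI[of _ "l1 (0, v) + c1"]) (auto simp: algebra_simps)
qed

lemma am_mixed: "g \<in> affine_maps \<Longrightarrow> g (x, z) - g (x, 0) - g (0, z) + g (0, 0) = 0"
proof -
  assume "g \<in> affine_maps"
  then obtain l1 c1 where 1: "linear l1" "\<forall>v. g v = l1 v + c1"
    unfolding affine_maps_def by blast
  have "l1 (x, z) = l1 ((x, 0) + (0, z))" by simp
  also have "\<dots> = l1 (x, 0) + l1 (0, z)" by (rule linear_add[OF 1(1)])
  finally show ?thesis using 1(2) linear_0[OF 1(1)] by (simp add: zero_prod_def)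
qed

lemma am_lin1: "g \<in> affine_maps \<Longrightarrow> linear (\<lambda>x. g (x, 0) - g (0, 0))"
proof -
  assume "g \<in> affine_maps"
  then obtain l1 c1 where 1: "linear l1" "\<forall>v. g v = l1 v + c1"
    unfolding affine_maps_def by blast
  have a: "l1 (x + y, 0) = l1 (x, 0) + l1 (y, 0)" for x y
    using linear_add[OF 1(1), of "(x, 0)" "(y, 0)"] by simp
  have b: "l1 (c *\<^sub>R x, 0) = c * l1 (x, 0)" for c x
    using linear_scale[OF 1(1), of c "(x, 0)"] by simp
  have z: "l1 (0, 0) = 0" using linear_0[OF 1(1)] by (simp add: zero_prod_def)
  show ?thesis using 1(2) a b z by (simp add: linear_real_iff)
qed

lemma am_lin2: "g \<in> affine_maps \<Longrightarrow> linear (\<lambda>z. g (0, z) - g (0, 0))"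
proof -
  assume "g \<in> affine_maps"
  then obtain l1 c1 where 1: "linear l1" "\<forall>v. g v = l1 v + c1"
    unfolding affine_maps_def by blast
  have a: "l1 (0, x + y) = l1 (0, x) + l1 (0, y)" for x y
    using linear_add[OF 1(1), of "(0, x)" "(0, y)"] by simp
  have b: "l1 (0, c *\<^sub>R x) = c * l1 (0, x)" for c x
    using linear_scale[OF 1(1), of c "(0, x)"] by simp
  have z: "l1 (0, 0) = 0" using linear_0[OF 1(1)] by (simp add: zero_prod_def)
  show ?thesis using 1(2) a b z by (simp add: linear_real_iff)
qed



locale s2c =
  fixes br :: "'a::euclidean_space \<Rightarrow> 'a \<Rightarrow> 'b::euclidean_space"
  assumes bil: "bilinear br" and skew: "\<And>x y. br x y = - br y x"
    and spn: "span (range (\<lambda>(x, y). br x y)) = UNIV"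
begin

lemma br_simps:
  "br (x + y) z = br x z + br y z" "br x (y + z) = br x y + br x z"
  "br (c *\<^sub>R x) y = c *\<^sub>R br x y" "br x (c *\<^sub>R y) = c *\<^sub>R br x y"
  "br (- x) y = - br x y" "br x (- y) = - br x y"
  "br (x - y) z = br x z - br y z" "br x (y - z) = br x y - br x z"
  "br 0 y = 0" "br x 0 = 0"
  using bil by (simp_all add: bilinear_ladd bilinear_radd bilinear_lmul bilinear_rmul
      bilinear_lneg bilinear_rneg bilinear_lsub bilinear_rsub bilinear_lzero bilinear_rzero)

lemma hmem: "f \<in> h_affine_maps br \<longleftrightarrow> (\<forall>x z y. affine_real_fun (\<lambda>t. f (x + t *\<^sub>R y, z + t *\<^sub>R br x y)))"
  unfolding h_affine_maps_def carnot_mult_def by (auto simp: br_simps)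

lemma vert:
  assumes "f \<in> h_affine_maps br"
  shows "affine_real_fun (\<lambda>t. f (x, z + t *\<^sub>R br x' y'))"
proof -
  have H: "\<And>x z y. affine_real_fun (\<lambda>t. f (x + t *\<^sub>R y, z + t *\<^sub>R br x y))"
    using assms hmem by blast
  obtain a1 c1 where 1: "\<And>t. f (x + x' + t *\<^sub>R y', z + br x x' + t *\<^sub>R br (x + x') y') = a1 * t + c1"
    using H[of "x + x'" y' "z + br x x'"] unfolding affine_real_fun_def by blast
  obtain a2 c2 where 2: "\<And>t. f (x - x' + t *\<^sub>R (- y'), z - br x x' + t *\<^sub>R br (x - x') (- y')) = a2 * t + c2"
    using H[of "x - x'" "- y'" "z - br x x'"] unfolding affine_real_fun_def by blast
  have "f (x, z + t *\<^sub>R br x' y') = ((a1 + a2) / 2) * t + (c1 + c2) / 2" for t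
  proof -
    let ?u = "x' + t *\<^sub>R y'"
    let ?g = "\<lambda>s. f (x + s *\<^sub>R ?u, (z + t *\<^sub>R br x' y') + s *\<^sub>R br x ?u)"
    have "?g 0 = (?g 1 + ?g (-1)) / 2" by (rule arf_mid) (rule H)
    moreover have "?g 0 = f (x, z + t *\<^sub>R br x' y')" by simp
    moreover have "?g 1 = f (x + x' + t *\<^sub>R y', z + br x x' + t *\<^sub>R br (x + x') y')"
      by (simp add: br_simps algebra_simps)
    moreover have "?g (-1) = f (x - x' + t *\<^sub>R (- y'), z - br x x' + t *\<^sub>R br (x - x') (- y'))"
      by (simp add: br_simps algebra_simps)
    ultimately show ?thesis using 1[of t] 2[of t] by (simp add: field_simps)
  qed
  then show ?thesis unfolding affine_real_fun_def by blast
qed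

lemma dz_h: "F \<in> h_affine_maps br \<Longrightarrow> dz v F \<in> h_affine_maps br"
proof -
  assume a: "F \<in> h_affine_maps br"
  have "affine_real_fun (\<lambda>t. dz v F (x + t *\<^sub>R y, z + t *\<^sub>R br x y))" for x z y
  proof -
    have "affine_real_fun (\<lambda>t. F (x + t *\<^sub>R y, (z + v) + t *\<^sub>R br x y) - F (x + t *\<^sub>R y, z + t *\<^sub>R br x y))"
      using a unfolding hmem by (intro arf_diff) auto
    then show ?thesis by (rule arf_eq) (simp add: dz_def algebra_simps)
  qed
  then show ?thesis unfolding hmem by blast
qed

lemma dz_self:
  assumes "F \<in> h_affine_maps br"
  shows "dz (br x' y') (dz (br x' y') F) = (\<lambda>_. 0)"
proof (rule ext)
  fix p :: "'a \<times> 'b"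
  obtain x z where p: "p = (x, z)" by fastforce
  let ?w = "br x' y'"
  have "affine_real_fun (\<lambda>t. F (x, z + t *\<^sub>R ?w))" by (rule vert[OF assms])
  from arf_2[OF this] have "F (x, z + 2 *\<^sub>R ?w) = 2 * F (x, z + 1 *\<^sub>R ?w) - F (x, z + 0 *\<^sub>R ?w)" .
  moreover have "z + 2 *\<^sub>R ?w = z + ?w + ?w" by (simp add: scaleR_2 add.assoc)
  ultimately show "dz ?w (dz ?w F) p = 0" by (simp add: dz_def p)
qed

lemma dz_vert:
  assumes "F \<in> h_affine_maps br"
  shows "dz (c *\<^sub>R br x' y') F = (\<lambda>p. c * dz (br x' y') F p)"
proof (rule ext)
  fix p :: "'a \<times> 'b"
  obtain x z where p: "p = (x, z)" by fastforce
  let ?w = "br x' y'"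
  have "affine_real_fun (\<lambda>t. F (x, z + t *\<^sub>R ?w))" by (rule vert[OF assms])
  then have "F (x, z + c *\<^sub>R ?w) = F (x, z + 0 *\<^sub>R ?w) + c * (F (x, z + 1 *\<^sub>R ?w) - F (x, z + 0 *\<^sub>R ?w))"
    unfolding arf_iff by blast
  then show "dz (c *\<^sub>R ?w) F p = c * dz ?w F p" by (simp add: dz_def p)
qed

lemma all_dz:
  assumes hF: "F \<in> h_affine_maps br" and sp: "span B0 = UNIV" and sub: "B0 \<subseteq> range (\<lambda>(x, y). br x y)"
    and d: "\<forall>w\<in>B0. dz w F \<in> affine_maps"
  shows "dz v F \<in> affine_maps"
proof -
  let ?S = "{v. \<forall>c. dz (c *\<^sub>R v) F \<in> affine_maps}"
  have "subspace ?S"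
    unfolding subspace_def
  proof (intro conjI ballI allI)
    have "dz 0 F = (\<lambda>_. 0)" by (rule ext) (simp add: dz_def)
    then show "0 \<in> ?S" using am_zero by simp
  next
    fix u v assume u: "u \<in> ?S" and v: "v \<in> ?S"
    show "u + v \<in> ?S"
    proof (rule CollectI, rule allI)
      fix c
      have "dz (c *\<^sub>R (u + v)) F = (\<lambda>p. dz (c *\<^sub>R u) F (fst p, snd p + c *\<^sub>R v) + dz (c *\<^sub>R v) F p)"
        by (rule ext) (simp add: dz_def algebra_simps)
      moreover have "(\<lambda>p. dz (c *\<^sub>R u) F (fst p, snd p + c *\<^sub>R v) + dz (c *\<^sub>R v) F p) \<in> affine_maps"
        using u v by (intro am_add am_shift) auto
      ultimately show "dz (c *\<^sub>R (u + v)) F \<in> affine_maps" by simp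
    qed
  next
    fix c u assume "u \<in> ?S"
    then show "c *\<^sub>R u \<in> ?S" by simp
  qed
  moreover have "B0 \<subseteq> ?S"
  proof
    fix w assume w: "w \<in> B0"
    then obtain x' y' where wd: "w = br x' y'" using sub by auto
    show "w \<in> ?S" using dz_vert[OF hF, of _ x' y'] am_cmul[OF d[rule_format, OF w]] wd by auto
  qed
  ultimately have "span B0 \<subseteq> ?S" by (metis span_minimal)
  then have "v \<in> ?S" using sp by auto
  then show ?thesis by (metis (mono_tags, lifting) mem_Collect_eq scaleR_one)
qed

end


context s2c begin

lemma base:
  assumes hF: "F \<in> h_affine_maps br" and dA: "\<And>v. dz v F \<in> affine_maps" and nA: "F \<notin> affine_maps"
  shows "\<exists>x1 x2 x3 (b :: 'a \<Rightarrow> 'b \<Rightarrow> real). bilinear b \<and> (\<forall>x x'. b x (br x x') = 0) \<and> b x1 (br x2 x3) = 1"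
proof -
  have H: "\<And>x z y. affine_real_fun (\<lambda>t. F (x + t *\<^sub>R y, z + t *\<^sub>R br x y))" using hF hmem by blast
  have V: "\<And>x z x' y'. affine_real_fun (\<lambda>t. F (x, z + t *\<^sub>R br x' y'))" using vert[OF hF] by blast
  define B where "B x z = F (x, z) - F (x, 0) - F (0, z) + F (0, 0)" for x z
  define a where "a z = F (0, z) - F (0, 0)" for z
  define Q where "Q z v = a (z + v) - a z - a v" for z v
  define lam where "lam x = F (x, 0) - F (0, 0)" for x
  define F0 where "F0 = F (0, 0)"
  have decomp: "F (x, z) = F0 + lam x + a z + B x z" for x z
    by (simp add: B_def a_def lam_def F0_def)
  have Bx: "linear (\<lambda>x. B x z)" for z
  proof -
    have "linear (\<lambda>x. dz z F (x, 0) - dz z F (0, 0))" by (rule am_lin1[OF dA])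
    moreover have "(\<lambda>x. dz z F (x, 0) - dz z F (0, 0)) = (\<lambda>x. B x z)"
      by (rule ext) (simp add: dz_def B_def)
    ultimately show ?thesis by simp
  qed
  have Badd: "B x (z + v) = B x z + B x v" for x z v
  proof -
    have "dz v F (x, z) - dz v F (x, 0) - dz v F (0, z) + dz v F (0, 0) = 0" by (rule am_mixed[OF dA])
    then show ?thesis by (simp add: dz_def B_def algebra_simps)
  qed
  have Bhom: "B x (c *\<^sub>R w) = c * B x w" if "w \<in> range (\<lambda>(x, y). br x y)" for x c w
  proof -
    from that obtain x' y' where w: "w = br x' y'" by auto
    have "affine_real_fun (\<lambda>t. (F (x, 0 + t *\<^sub>R w) - F (0, 0 + t *\<^sub>R w)) - (F (x, 0) - F (0, 0)))"
      unfolding w by (intro arf_diff V arf_const)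
    then have "affine_real_fun (\<lambda>t. B x (t *\<^sub>R w))" by (rule arf_eq) (simp add: B_def)
    from arf_hom[OF this] show ?thesis by (simp add: B_def)
  qed
  have Blin: "linear (B x)" for x by (rule lin_from_span[OF Badd Bhom spn])
  have bilB: "bilinear B" unfolding bilinear_def using Blin Bx by simp
  have Qz: "linear (\<lambda>z. Q z v)" for v
  proof -
    have "linear (\<lambda>z. dz v F (0, z) - dz v F (0, 0))" by (rule am_lin2[OF dA])
    moreover have "(\<lambda>z. dz v F (0, z) - dz v F (0, 0)) = (\<lambda>z. Q z v)"
      by (rule ext) (simp add: dz_def Q_def a_def)
    ultimately show ?thesis by simp
  qed
  have Qsym: "Q z v = Q v z" for z v by (simp add: Q_def add.commute)
  have Qv: "linear (Q z)" for z
  proof -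
    have "(\<lambda>v. Q v z) = Q z" by (rule ext) (simp add: Qsym)
    then show ?thesis using Qz[of z] by simp
  qed
  have ahom: "a (c *\<^sub>R w) = c * a w" if "w \<in> range (\<lambda>(x, y). br x y)" for c w
  proof -
    from that obtain x' y' where w: "w = br x' y'" by auto
    have "affine_real_fun (\<lambda>t. F (0, 0 + t *\<^sub>R w) - F (0, 0))"
      unfolding w by (intro arf_diff V arf_const)
    then have "affine_real_fun (\<lambda>t. a (t *\<^sub>R w))" by (rule arf_eq) (simp add: a_def)
    from arf_hom[OF this] show ?thesis by (simp add: a_def)
  qed
  have Qww: "Q w w = 0" if "w \<in> range (\<lambda>(x, y). br x y)" for w
  proof -
    have "a (2 *\<^sub>R w) = 2 * a w" by (rule ahom[OF that])
    then show ?thesis by (simp add: Q_def scaleR_2)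
  qed
  have Qadd2: "Q (z + v) (z + v) = Q z z + 2 * Q z v + Q v v" for z v
    using linear_add[OF Qz[of "z + v"], of z v] linear_add[OF Qv[of z], of z v] linear_add[OF Qv[of v], of z v] Qsym[of z v]
    by simp
  have Qsc: "Q (c *\<^sub>R z) (c *\<^sub>R z) = c * c * Q z z" for c z
    using linear_scale[OF Qz[of "c *\<^sub>R z"], of c z] linear_scale[OF Qv[of z], of c z] by simp
  define mu where "mu z = a z - Q z z / 2" for z
  have muadd: "mu (z + v) = mu z + mu v" for z v
  proof -
    have "a (z + v) = Q z v + a z + a v" by (simp add: Q_def)
    then show ?thesis unfolding mu_def using Qadd2[of z v] by (simp add: field_simps)
  qed
  have muhom: "mu (c *\<^sub>R w) = c * mu w" if "w \<in> range (\<lambda>(x, y). br x y)" for c w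
    unfolding mu_def using ahom[OF that, of c] Qsc[of c w] Qww[OF that] by simp
  have mulin: "linear mu" by (rule lin_from_span[OF muadd muhom spn])
  have lamhom: "lam (t *\<^sub>R x) = t * lam x" for t x
  proof -
    have "affine_real_fun (\<lambda>t. F (0 + t *\<^sub>R x, 0 + t *\<^sub>R br 0 x) - F (0, 0))" by (intro arf_diff H arf_const)
    then have "affine_real_fun (\<lambda>t. lam (t *\<^sub>R x))" by (rule arf_eq) (simp add: lam_def br_simps)
    from arf_hom[OF this] show ?thesis by (simp add: lam_def)
  qed
  have key: "\<exists>P R. \<forall>t. lam (x + t *\<^sub>R y) = P + R * t - t * t * B y (br x y)" for x y
  proof -
    let ?w = "br x y"
    obtain A1 C1 where A: "\<And>t. F (x + t *\<^sub>R y, 0 + t *\<^sub>R ?w) = A1 * t + C1"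
      using H[of x y 0] unfolding affine_real_fun_def by blast
    have "lam (x + t *\<^sub>R y) = (C1 - F0) + (A1 - a ?w - B x ?w) * t - t * t * B y ?w" for t
    proof -
      have "F (x + t *\<^sub>R y, t *\<^sub>R ?w) = F0 + lam (x + t *\<^sub>R y) + a (t *\<^sub>R ?w) + B (x + t *\<^sub>R y) (t *\<^sub>R ?w)"
        by (rule decomp)
      moreover have "a (t *\<^sub>R ?w) = t * a ?w" by (rule ahom) auto
      moreover have "B (x + t *\<^sub>R y) (t *\<^sub>R ?w) = t * B x ?w + t * t * B y ?w"
        using bilinear_ladd[OF bilB] bilinear_lmul[OF bilB] bilinear_rmul[OF bilB]
        by (simp add: algebra_simps)
      ultimately show ?thesis using A[of t] by (simp add: algebra_simps)
    qed
    then show ?thesis by blast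
  qed
  have Bker: "B y (br x y) = 0" for x y
  proof -
    obtain P R where 1: "\<And>t. lam (x + t *\<^sub>R y) = P + R * t - t * t * B y (br x y)" using key by blast
    obtain P2 R2 where 2: "\<And>t. lam (2 *\<^sub>R x + t *\<^sub>R y) = P2 + R2 * t - t * t * B y (br (2 *\<^sub>R x) y)" using key by blast
    have e: "lam (2 *\<^sub>R x + t *\<^sub>R y) = 2 * lam (x + (t / 2) *\<^sub>R y)" for t
    proof -
      have "2 *\<^sub>R x + t *\<^sub>R y = 2 *\<^sub>R (x + (t / 2) *\<^sub>R y)" by (simp add: algebra_simps)
      then show ?thesis using lamhom by simp
    qed
    have k2: "B y (br (2 *\<^sub>R x) y) = 2 * B y (br x y)"
      using linear_scale[OF Blin[of y], of 2 "br x y"] by (simp add: br_simps)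
    have i0: "P2 = 2 * P" using e[of 0] 1[of 0] 2[of 0] by simp
    have i1: "P2 + R2 - 2 * B y (br x y) = 2 * (P + R / 2 - B y (br x y) / 4)"
      using e[of 1] 1[of "1/2"] 2[of 1] k2 by simp
    have i2: "P2 - R2 - 2 * B y (br x y) = 2 * (P - R / 2 - B y (br x y) / 4)"
      using e[of "-1"] 1[of "-1/2"] 2[of "-1"] k2 by simp
    show ?thesis using i0 i1 i2 by (smt (verit) | simp add: field_simps | linarith)
  qed
  have lamaff: "lam (x + t *\<^sub>R y) = lam x + t * (lam (x + y) - lam x)" for x y t
  proof -
    obtain P R where 1: "\<And>t. lam (x + t *\<^sub>R y) = P + R * t - t * t * B y (br x y)" using key by blast
    show ?thesis using 1[of t] 1[of 0] 1[of 1] Bker[of y x] by simp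
  qed
  have lamadd: "lam (x + y) = lam x + lam y" for x y
  proof -
    have A: "lam (x + (1/2) *\<^sub>R (y - x)) = lam x + (1/2) * (lam (x + (y - x)) - lam x)" by (rule lamaff)
    have Bq: "x + (1/2) *\<^sub>R (y - x) = (1/2) *\<^sub>R (x + y)"
    proof -
      have h: "x = (1/2) *\<^sub>R x + (1/2) *\<^sub>R x" by (metis scaleR_half_double scaleR_add_right)
      show ?thesis by (simp add: algebra_simps) (metis h)
    qed
    have "lam ((1/2) *\<^sub>R (x + y)) = lam x + (1/2) * (lam y - lam x)" using A unfolding Bq by simp
    then have "(1/2) * lam (x + y) = lam x + (1/2) * (lam y - lam x)" using lamhom[of "1/2" "x + y"] by simp
    then show ?thesis by (smt (verit) | simp add: field_simps)
  qed
  have lamlin: "linear lam"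
    by (rule linearI) (simp_all add: lamadd lamhom)
  have Fform: "F (x, z) = F0 + lam x + mu z + Q z z / 2 + B x z" for x z
    using decomp[of x z] by (simp add: mu_def)
  show ?thesis
  proof (cases "\<exists>x z. B x z \<noteq> 0")
    case True
    then obtain x0 z0 where xz: "B x0 z0 \<noteq> 0" by blast
    have "\<exists>x2 x3. B x0 (br x2 x3) \<noteq> 0"
    proof (rule ccontr)
      assume "\<not> ?thesis"
      then have "\<And>w. w \<in> range (\<lambda>(x, y). br x y) \<Longrightarrow> B x0 w = 0" by auto
      then have "B x0 z0 = 0" by (rule lin_zero_span[OF Blin _ spn])
      then show False using xz by simp
    qed
    then obtain x2 x3 where k: "B x0 (br x2 x3) \<noteq> 0" by blast
    define b where "b x z = B x z / B x0 (br x2 x3)" for x z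
    have "bilinear b"
      unfolding bilinear_def b_def
      using linear_add[OF Blin] linear_scale[OF Blin] linear_add[OF Bx] linear_scale[OF Bx]
      by (simp add: linear_real_iff add_divide_distrib)
    moreover have "b x (br x x') = 0" for x x'
    proof -
      have "B x (br x x') = B x (- br x' x)" using skew by metis
      also have "\<dots> = - B x (br x' x)" using linear_neg[OF Blin] by blast
      finally show ?thesis using Bker[of x x'] by (simp add: b_def)
    qed
    moreover have "b x0 (br x2 x3) = 1" using k by (simp add: b_def)
    ultimately have "bilinear b \<and> (\<forall>x x'. b x (br x x') = 0) \<and> b x0 (br x2 x3) = 1" by blast
    then show ?thesis by blast
  next
    case False
    then have B0: "B x z = 0" for x z by blast
    have "\<exists>z. Q z z \<noteq> 0"
    proof (rule ccontr)
      assume "\<not> ?thesis"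
      then have Q0: "Q z z = 0" for z by blast
      have "linear (\<lambda>p. lam (fst p) + mu (snd p))"
        using linear_add[OF lamlin] linear_scale[OF lamlin] linear_add[OF mulin] linear_scale[OF mulin]
        by (simp add: linear_real_iff algebra_simps)
      moreover have "\<forall>p. F p = lam (fst p) + mu (snd p) + F0"
        using Fform B0 Q0 by auto
      ultimately have "F \<in> affine_maps" unfolding affine_maps_def by blast
      then show False using nA by simp
    qed
    then obtain z0 where z0: "Q z0 z0 \<noteq> 0" by blast
    have "\<exists>w1\<in>range (\<lambda>(x, y). br x y). \<exists>w2\<in>range (\<lambda>(x, y). br x y). Q w1 w2 \<noteq> 0"
    proof (rule ccontr)
      assume "\<not> ?thesis"
      then have 1: "\<And>w1 w2. w1 \<in> range (\<lambda>(x, y). br x y) \<Longrightarrow> w2 \<in> range (\<lambda>(x, y). br x y) \<Longrightarrow> Q w1 w2 = 0"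
        by blast
      have 2: "Q w1 v = 0" if "w1 \<in> range (\<lambda>(x, y). br x y)" for w1 v
        by (rule lin_zero_span[OF Qv _ spn]) (rule 1[OF that])
      have "Q z0 z0 = 0" by (rule lin_zero_span[OF Qz _ spn]) (rule 2)
      then show False using z0 by simp
    qed
    then obtain x1 u x2 x3 where k: "Q (br x1 u) (br x2 x3) \<noteq> 0" by auto
    define b where "b x z = Q (br x u) z / Q (br x1 u) (br x2 x3)" for x z
    have "bilinear b"
      unfolding bilinear_def b_def
      using linear_add[OF Qv] linear_scale[OF Qv] linear_add[OF Qz] linear_scale[OF Qz]
      by (simp add: linear_real_iff add_divide_distrib br_simps)
    moreover have "b x (br x x') = 0" for x x'
    proof -
      have "Q (br x (u + x')) (br x (u + x')) = 0" by (rule Qww) auto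
      then have "Q (br x u) (br x u) + 2 * Q (br x u) (br x x') + Q (br x x') (br x x') = 0"
        using Qadd2 by (simp add: br_simps)
      moreover have "Q (br x u) (br x u) = 0" "Q (br x x') (br x x') = 0" by (rule Qww, auto)+
      ultimately show ?thesis by (simp add: b_def)
    qed
    moreover have "b x1 (br x2 x3) = 1" using k by (simp add: b_def)
    ultimately have "bilinear b \<and> (\<forall>x x'. b x (br x x') = 0) \<and> b x1 (br x2 x3) = 1" by blast
    then show ?thesis by blast
  qed
qed

end

lemma dz_zero: "dz w (\<lambda>_. 0) = (\<lambda>_. 0)"
  by (rule ext) (simp add: dz_def)

context s2c begin

lemma descent:
  assumes fin: "finite B0" and sub: "B0 \<subseteq> range (\<lambda>(x, y). br x y)" and sp: "span B0 = UNIV"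
  shows "\<forall>F. card {w \<in> B0. dz w F \<noteq> (\<lambda>_. 0)} = n \<longrightarrow> F \<in> h_affine_maps br \<longrightarrow> F \<notin> affine_maps \<longrightarrow>
    (\<exists>x1 x2 x3 (b :: 'a \<Rightarrow> 'b \<Rightarrow> real). bilinear b \<and> (\<forall>x x'. b x (br x x') = 0) \<and> b x1 (br x2 x3) = 1)"
proof (induction n rule: less_induct)
  case (less n)
  show ?case
  proof (intro allI impI)
    fix F :: "'a \<times> 'b \<Rightarrow> real"
    assume cn: "card {w \<in> B0. dz w F \<noteq> (\<lambda>_. 0)} = n" and hF: "F \<in> h_affine_maps br" and nA: "F \<notin> affine_maps"
    show "\<exists>x1 x2 x3 (b :: 'a \<Rightarrow> 'b \<Rightarrow> real). bilinear b \<and> (\<forall>x x'. b x (br x x') = 0) \<and> b x1 (br x2 x3) = 1"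
    proof (cases "\<forall>w\<in>B0. dz w F \<in> affine_maps")
      case True
      have "dz v F \<in> affine_maps" for v by (rule all_dz[OF hF sp sub True])
      then show ?thesis by (rule base[OF hF _ nA])
    next
      case False
      then obtain w where w: "w \<in> B0" "dz w F \<notin> affine_maps" by blast
      define G where "G = dz w F"
      have hG: "G \<in> h_affine_maps br" unfolding G_def by (rule dz_h[OF hF])
      obtain x' y' where wd: "w = br x' y'" using w(1) sub by auto
      have s1: "{u \<in> B0. dz u G \<noteq> (\<lambda>_. 0)} \<subseteq> {w \<in> B0. dz w F \<noteq> (\<lambda>_. 0)}"
      proof
        fix u assume u: "u \<in> {u \<in> B0. dz u G \<noteq> (\<lambda>_. 0)}"
        have "dz u F \<noteq> (\<lambda>_. 0)"
        proof
          assume z: "dz u F = (\<lambda>_. 0)"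
          have "dz u G = dz w (dz u F)" unfolding G_def by (rule dz_comm)
          also have "\<dots> = (\<lambda>_. 0)" unfolding z by (rule dz_zero)
          finally show False using u by simp
        qed
        then show "u \<in> {w \<in> B0. dz w F \<noteq> (\<lambda>_. 0)}" using u by simp
      qed
      have i1: "w \<in> {w \<in> B0. dz w F \<noteq> (\<lambda>_. 0)}" using w am_zero by auto
      have i2: "w \<notin> {u \<in> B0. dz u G \<noteq> (\<lambda>_. 0)}"
        using dz_self[OF hF, of x' y'] wd unfolding G_def by simp
      have s2: "{u \<in> B0. dz u G \<noteq> (\<lambda>_. 0)} \<subset> {w \<in> B0. dz w F \<noteq> (\<lambda>_. 0)}"
        using s1 i1 i2 by blast
      have lt: "card {u \<in> B0. dz u G \<noteq> (\<lambda>_. 0)} < n"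
        unfolding cn[symmetric] by (rule psubset_card_mono) (use fin s2 in auto)
      have nG: "G \<notin> affine_maps" using w(2) unfolding G_def .
      show ?thesis using less[OF lt] hG nG by blast
    qed
  qed
qed

lemma br_self: "br x x = 0"
proof -
  have "br x x + br x x = 0" using skew[of x x] by (simp add: eq_neg_iff_add_eq_0)
  then have "2 *\<^sub>R br x x = 0" by (simp add: scaleR_2)
  then show ?thesis by simp
qed

lemma indep_from_b:
  assumes b1: "bilinear b" and b2: "\<forall>x x'. b x (br x x') = 0" and b3: "b x1 (br x2 x3) = (1::real)"
  shows "independent {br x1 x2, br x1 x3, br x2 x3} \<and> card {br x1 x2, br x1 x3, br x2 x3} = 3"
proof -
  have alt: "b y (br x z) = - b x (br y z)" for x y z
  proof -
    have "b (x + y) (br (x + y) z) = 0" using b2 by blast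
    then have "b x (br x z) + b x (br y z) + b y (br x z) + b y (br y z) = 0"
      using bilinear_ladd[OF b1] bilinear_radd[OF b1] by (simp add: br_simps)
    then show ?thesis using b2 by simp
  qed
  have rz: "b x (br y y) = 0" for x y using bilinear_rzero[OF b1] by (simp add: br_self)
  have rn: "b x (- v) = - b x v" for x v by (rule bilinear_rneg[OF b1])
  let ?a = "br x1 x2" and ?c = "br x1 x3" and ?d = "br x2 x3"
  have e1: "b x1 ?a = 0" "b x1 ?c = 0" "b x1 ?d = 1" using b2 b3 by auto
  have e2: "b x2 ?a = 0" "b x2 ?c = -1" "b x2 ?d = 0"
    using alt[of x1 x2 x2] rz[of x1 x2] alt[of x1 x2 x3] b3 b2 by auto
  have e3: "b x3 ?a = 1" "b x3 ?c = 0" "b x3 ?d = 0"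
  proof -
    have "b x3 ?a = - b x1 (br x3 x2)" by (rule alt)
    also have "br x3 x2 = - ?d" by (rule skew)
    finally show "b x3 ?a = 1" using rn b3 by simp
    show "b x3 ?c = 0" using alt[of x1 x3 x3] rz by simp
    show "b x3 ?d = 0" using alt[of x2 x3 x3] rz by simp
  qed
  have d1: "?a \<noteq> ?c" using e2 by auto
  have d2: "?a \<noteq> ?d" using e1 by auto
  have d3: "?c \<noteq> ?d" using e1 by auto
  have card: "card {?a, ?c, ?d} = 3" using d1 d2 d3 by simp
  have ind: "independent {?a, ?c, ?d}"
  proof
    assume "dependent {?a, ?c, ?d}"
    then obtain u where u: "\<exists>v\<in>{?a, ?c, ?d}. u v \<noteq> 0" "(\<Sum>v\<in>{?a, ?c, ?d}. u v *\<^sub>R v) = 0"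
      by (auto simp: dependent_finite)
    then have s: "u ?a *\<^sub>R ?a + u ?c *\<^sub>R ?c + u ?d *\<^sub>R ?d = 0"
      using d1 d2 d3 by (simp add: add.assoc)
    have lin: "b x (u ?a *\<^sub>R ?a + u ?c *\<^sub>R ?c + u ?d *\<^sub>R ?d) = u ?a * b x ?a + u ?c * b x ?c + u ?d * b x ?d" for x
      using bilinear_radd[OF b1] bilinear_rmul[OF b1] by simp
    have "u ?d = 0" using lin[of x1] s e1 bilinear_rzero[OF b1] by simp
    moreover have "u ?c = 0" using lin[of x2] s e2 bilinear_rzero[OF b1] by simp
    moreover have "u ?a = 0" using lin[of x3] s e3 bilinear_rzero[OF b1] by simp
    ultimately show False using u(1) by auto
  qed
  show ?thesis using ind card by simp
qed

end

theorem proposition6p8: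
  fixes br :: "'a::euclidean_space \<Rightarrow> 'a \<Rightarrow> 'b::euclidean_space"
  assumes "step2_carnot br"
    and "affine_maps \<subset> h_affine_maps br"
  shows "\<exists>x1 x2 x3.
           independent {br x1 x2, br x1 x3, br x2 x3} \<and> card {br x1 x2, br x1 x3, br x2 x3} = 3
           \<and> (\<exists>b :: 'a \<Rightarrow> 'b \<Rightarrow> real. bilinear b \<and> (\<forall>x x'. b x (br x x') = 0) \<and> b x1 (br x2 x3) = 1)"
proof -
  have a1: "bilinear br" "\<And>x y. br x y = - br y x" "span (range (\<lambda>(x, y). br x y)) = UNIV"
    using assms(1) unfolding step2_carnot_def by blast+
  have "s2c br" by (rule s2c.intro) (rule a1)+
  then interpret s2c br .
  obtain f where f: "f \<in> h_affine_maps br" "f \<notin> affine_maps" using assms(2) by blast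
  obtain B0 where B0: "B0 \<subseteq> range (\<lambda>(x, y). br x y)" "independent B0" "range (\<lambda>(x, y). br x y) \<subseteq> span B0"
    by (rule maximal_independent_subset)
  have fin: "finite B0" using B0(2) by (rule finiteI_independent)
  have "span (range (\<lambda>(x, y). br x y)) \<subseteq> span B0"
    using B0(3) by (metis span_minimal subspace_span)
  then have sp: "span B0 = UNIV" using spn by auto
  obtain x1 x2 x3 and b :: "'a \<Rightarrow> 'b \<Rightarrow> real" where
    b: "bilinear b" "\<forall>x x'. b x (br x x') = 0" "b x1 (br x2 x3) = 1"
    using descent[OF fin B0(1) sp] f by blast
  have "independent {br x1 x2, br x1 x3, br x2 x3} \<and> card {br x1 x2, br x1 x3, br x2 x3} = 3"
    by (rule indep_from_b[OF b])
  then show ?thesis using b by blast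
qed

end
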